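(* Let $n\ge1$ and $\bm{N}=(N_0,\ldots,N_{n-1},-\sum_{i=0}^{n-1}N_i)$ with integers $N_i>0$. Let $s_k=\sum_{j=0}^kN_j$ (with $s_{-1}=0$) and for $1\le k\le n$ let \[ c_k=\frac{s_{n-k}}{k}-\frac{s_{n-k-1}}{k+1}=\frac{N_{n-k}}{k+1}+\frac{s_{n-k}}{k(k+1)}. \] Then the uniform average of the vertices of $\mathcal{F}_n(\bm{N})$ is the flow $\bm{f}$ with $f_{ij}=c_{n-i}$ for all $0\le i<j\le n$. (Equivalently, in the $n\times n$ matrix form the row $i$ entries $a_{ij}$ with $i+j\le n-1$ equal $c_{n-i}$, and the entry $a_{k',n-k'}$ for $1\le k'\le n-1$ in the row with label $k=n-k'$ equals $b_k=\frac{k}{k+1}s_{n-k-1}$.)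
   Context: $\mathcal{F}_n(\bm{N})$ is the polytope of $\bm{f}=(f_{ij})_{0\le i<j\le n}\in\mathbb{R}_{\ge0}^{\binom{n+1}{2}}$ with $\sum_{j>i} f_{ij}-\sum_{k<i} f_{ki}=N_i$ for every $i\in\{0,\ldots,n\}$. The uniform average of vertices is the arithmetic mean of its (finitely many) vertices. The matrix form of $\bm f$ is $(a_{ij})_{0\le i,j\le n-1}$ with $a_{ij}=f_{i,n-j}$ for $i+j\le n-1$, $a_{i,n-i}=\sum_{k<i}(N_k-f_{k,i})$ for $1\le i\le n-1$, zero otherwise. *)

theory Defs
  imports Complex_Main
begin

text \<open>A flow on the complete graph with vertices 0..n is represented as a function
  f :: nat => nat => real whose value f i j is the flow on edge (i,j), i<j<=n;
  outside these pairs f is required to be 0, so the ambient space is the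
  coordinate space indexed by {(i,j). i<j<=n}.\<close>

definition flow_polytope :: "nat \<Rightarrow> (nat \<Rightarrow> int) \<Rightarrow> (nat \<Rightarrow> nat \<Rightarrow> real) set" where
  "flow_polytope n N = {f.
     (\<forall>i j. \<not> (i < j \<and> j \<le> n) \<longrightarrow> f i j = 0) \<and>
     (\<forall>i j. i < j \<and> j \<le> n \<longrightarrow> f i j \<ge> 0) \<and>
     (\<forall>i\<le>n. (\<Sum>j\<in>{i<..n}. f i j) - (\<Sum>k<i. f k i) = real_of_int (N i))}"

definition vertices :: "(nat \<Rightarrow> nat \<Rightarrow> real) set \<Rightarrow> (nat \<Rightarrow> nat \<Rightarrow> real) set" where
  "vertices P = {f \<in> P. \<not> (\<exists>g\<in>P. \<exists>h\<in>P. g \<noteq> h \<and>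
       (\<exists>t::real. 0 < t \<and> t < 1 \<and> f = (\<lambda>i j. t * g i j + (1 - t) * h i j)))}"

definition vertex_average :: "(nat \<Rightarrow> nat \<Rightarrow> real) set \<Rightarrow> (nat \<Rightarrow> nat \<Rightarrow> real)" where
  "vertex_average P = (\<lambda>i j. (\<Sum>v\<in>vertices P. v i j) / real (card (vertices P)))"

text \<open>psum N m = N_0 + ... + N_(m-1); thus s_k = psum N (k+1) and s_(-1) = psum N 0 = 0.\<close>

definition psum :: "(nat \<Rightarrow> int) \<Rightarrow> nat \<Rightarrow> real" where
  "psum N m = real_of_int (\<Sum>j<m. N j)"

definition cval :: "nat \<Rightarrow> (nat \<Rightarrow> int) \<Rightarrow> nat \<Rightarrow> real" where
  "cval n N k = psum N (n - k + 1) / real k - psum N (n - k) / real (k + 1)"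

end

theory Submission
  imports Defs "HOL-Library.FuncSet"
begin

function flowF :: "(nat \<Rightarrow> nat) \<Rightarrow> (nat \<Rightarrow> real) \<Rightarrow> nat \<Rightarrow> real" where
  "flowF \<tau> M i = M i + (\<Sum>k<i. if \<tau> k = i then flowF \<tau> M k else 0)"
  by auto
termination by (relation "measure (\<lambda>(\<tau>,M,i). i)") auto

declare flowF.simps[simp del]

definition Fl :: "nat \<Rightarrow> (nat \<Rightarrow> nat) \<Rightarrow> (nat \<Rightarrow> real) \<Rightarrow> nat \<Rightarrow> nat \<Rightarrow> real" where
  "Fl n \<tau> M k l = (if k < n \<and> l = \<tau> k then flowF \<tau> M k else 0)"

definition nf :: "nat \<Rightarrow> (nat \<Rightarrow> nat \<Rightarrow> real) \<Rightarrow> nat \<Rightarrow> real" where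
  "nf n g m = (\<Sum>l\<in>{m<..n}. g m l) - (\<Sum>k<m. g k m)"

definition Sset :: "nat \<Rightarrow> (nat \<Rightarrow> nat) set" where
  "Sset n = PiE {..<n} (\<lambda>i. {i<..n})"

lemma flowF_local:
  assumes "\<forall>m<k. \<sigma> m = \<tau> m"
  shows "flowF \<sigma> M k = flowF \<tau> M k"
proof -
  have "\<forall>i\<le>k. flowF \<sigma> M i = flowF \<tau> M i"
  proof (intro allI impI)
    fix i assume "i \<le> k" then show "flowF \<sigma> M i = flowF \<tau> M i"
    proof (induction i rule: less_induct)
      case (less i)
      have "(\<Sum>m<i. if \<sigma> m = i then flowF \<sigma> M m else 0) = (\<Sum>m<i. if \<tau> m = i then flowF \<tau> M m else 0)"
        using less assms by (intro sum.cong) auto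
      then show ?case by (subst (1 2) flowF.simps) simp
    qed
  qed
  then show ?thesis by simp
qed

lemma flowF_zero:
  assumes "\<forall>k\<le>i. M k = 0"
  shows "flowF \<tau> M i = 0"
  using assms
proof (induction i rule: less_induct)
  case (less i)
  have "(\<Sum>m<i. if \<tau> m = i then flowF \<tau> M m else 0) = 0"
    using less by (intro sum.neutral) auto
  then show ?case using less.prems by (subst flowF.simps) simp
qed

lemma flowF_ge:
  assumes "\<forall>k<n. M k > 0" "i < n"
  shows "flowF \<tau> M i \<ge> M i"
  using assms(2)
proof (induction i rule: less_induct)
  case (less i)
  have "(\<Sum>m<i. if \<tau> m = i then flowF \<tau> M m else 0) \<ge> 0"
  proof (intro sum_nonneg)
    fix m assume "m \<in> {..<i}"
    then have "flowF \<tau> M m \<ge> M m" "M m > 0" using less assms by auto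
    then show "(if \<tau> m = i then flowF \<tau> M m else 0) \<ge> 0" by auto
  qed
  then show ?case by (subst flowF.simps) simp
qed

definition good :: "nat \<Rightarrow> (nat \<Rightarrow> nat) \<Rightarrow> bool" where
  "good n \<tau> = (\<forall>k<n. k < \<tau> k \<and> \<tau> k \<le> n)"

lemma nf_lt:
  assumes "good n \<tau>" "m < n"
  shows "nf n (Fl n \<tau> M) m = M m"
proof -
  have 1: "(\<Sum>l\<in>{m<..n}. Fl n \<tau> M m l) = flowF \<tau> M m"
    using assms unfolding Fl_def good_def by (simp add: sum.delta')
  have 2: "(\<Sum>k<m. Fl n \<tau> M k m) = (\<Sum>k<m. if \<tau> k = m then flowF \<tau> M k else 0)"
    using assms unfolding Fl_def by (intro sum.cong) auto
  show ?thesis unfolding nf_def 1 2 by (subst flowF.simps) simp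
qed

lemma nf_n:
  assumes "good n \<tau>"
  shows "nf n (Fl n \<tau> M) n = - (\<Sum>k<n. M k)"
proof -
  define v where "v = flowF \<tau> M"
  have 2: "(\<Sum>k<n. Fl n \<tau> M k n) = (\<Sum>k<n. if \<tau> k = n then v k else 0)"
    unfolding Fl_def v_def by (intro sum.cong) auto
  have "(\<Sum>i<n. v i) = (\<Sum>i<n. M i + (\<Sum>k<i. if \<tau> k = i then v k else 0))"
    unfolding v_def by (intro sum.cong refl) (subst flowF.simps, simp)
  also have "\<dots> = (\<Sum>i<n. M i) + (\<Sum>i<n. \<Sum>k<n. if k < i \<and> \<tau> k = i then v k else 0)"
  proof -
    have "\<And>i. i < n \<Longrightarrow> (\<Sum>k<i. if \<tau> k = i then v k else 0) = (\<Sum>k<n. if k < i \<and> \<tau> k = i then v k else 0)"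
    proof -
      fix i assume "i < n"
      have "(\<Sum>k<n. if k < i \<and> \<tau> k = i then v k else 0) = (\<Sum>k\<in>{..<n} \<inter> {..<i}. if \<tau> k = i then v k else 0)"
        by (subst sum.inter_restrict) (auto intro: sum.cong)
      also have "{..<n} \<inter> {..<i} = {..<i}" using \<open>i<n\<close> by auto
      finally show "(\<Sum>k<i. if \<tau> k = i then v k else 0) = (\<Sum>k<n. if k < i \<and> \<tau> k = i then v k else 0)" by simp
    qed
    then show ?thesis by (simp add: sum.distrib)
  qed
  also have "(\<Sum>i<n. \<Sum>k<n. if k < i \<and> \<tau> k = i then v k else 0) = (\<Sum>k<n. \<Sum>i<n. if k < i \<and> \<tau> k = i then v k else 0)"
    by (rule sum.swap)
  also have "\<dots> = (\<Sum>k<n. if \<tau> k < n then v k else 0)"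
  proof (intro sum.cong refl)
    fix k assume "k \<in> {..<n}"
    then have "k < \<tau> k" using assms unfolding good_def by auto
    then have "(\<Sum>i<n. if k < i \<and> \<tau> k = i then v k else 0) = (\<Sum>i<n. if \<tau> k = i then v k else 0)"
      by (intro sum.cong) auto
    then show "(\<Sum>i<n. if k < i \<and> \<tau> k = i then v k else 0) = (if \<tau> k < n then v k else 0)"
      by (simp add: sum.delta)
  qed
  finally have 3: "(\<Sum>i<n. v i) = (\<Sum>i<n. M i) + (\<Sum>k<n. if \<tau> k < n then v k else 0)" .
  have 4: "(\<Sum>i<n. v i) = (\<Sum>k<n. if \<tau> k < n then v k else 0) + (\<Sum>k<n. if \<tau> k = n then v k else 0)"
    unfolding sum.distrib[symmetric] using assms unfolding good_def
    by (intro sum.cong refl) (auto simp: nat_less_le)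
  have 5: "nf n (Fl n \<tau> M) n = 0 - (\<Sum>k<n. Fl n \<tau> M k n)" unfolding nf_def by simp
  show ?thesis unfolding 5 2 using 3 4 by linarith
qed

lemma Sset_good: assumes "\<sigma> \<in> Sset n" shows "good n \<sigma>"
  unfolding good_def
proof (intro allI impI)
  fix k assume "k < n"
  have "\<sigma> k \<in> {k<..n}" using PiE_mem[OF assms[unfolded Sset_def]] \<open>k<n\<close> by simp
  then show "k < \<sigma> k \<and> \<sigma> k \<le> n" by simp
qed
lemma nf_P: "f \<in> flow_polytope n N \<Longrightarrow> m \<le> n \<Longrightarrow> nf n f m = real_of_int (N m)"
  unfolding flow_polytope_def nf_def by auto

lemma Fl_in_P:
  assumes "\<forall>i<n. N i > 0" "N n = - (\<Sum>i<n. N i)" "\<sigma> \<in> Sset n"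
  shows "Fl n \<sigma> (\<lambda>i. real_of_int (N i)) \<in> flow_polytope n N"
proof -
  let ?M = "\<lambda>i. real_of_int (N i)"
  have g: "good n \<sigma>" using assms(3) by (rule Sset_good)
  have pos: "\<forall>k<n. ?M k > 0" using assms(1) by auto
  have A: "\<forall>i j. \<not> (i < j \<and> j \<le> n) \<longrightarrow> Fl n \<sigma> ?M i j = 0"
  proof (intro allI impI)
    fix i j assume "\<not> (i < j \<and> j \<le> n)"
    then show "Fl n \<sigma> ?M i j = 0" using g unfolding Fl_def good_def by (cases "i < n") auto
  qed
  have B: "\<forall>i j. i < j \<and> j \<le> n \<longrightarrow> Fl n \<sigma> ?M i j \<ge> 0"
  proof (intro allI impI)
    fix i j assume "i < j \<and> j \<le> n"
    show "Fl n \<sigma> ?M i j \<ge> 0"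
    proof (cases "i < n \<and> j = \<sigma> i")
      case True
      then have "flowF \<sigma> ?M i \<ge> ?M i" "?M i > 0" using flowF_ge[OF pos] pos by auto
      then show ?thesis unfolding Fl_def using True by simp
    qed (auto simp: Fl_def)
  qed
  have C: "\<forall>i\<le>n. nf n (Fl n \<sigma> ?M) i = ?M i"
  proof (intro allI impI)
    fix i assume "i \<le> n"
    show "nf n (Fl n \<sigma> ?M) i = ?M i"
    proof (cases "i < n")
      case True then show ?thesis using nf_lt[OF g True, where M="\<lambda>i. real_of_int (N i)"] by simp
    next
      case False then have "i = n" using \<open>i \<le> n\<close> by simp
      have "nf n (Fl n \<sigma> ?M) n = - (\<Sum>k<n. ?M k)" using nf_n[OF g, where M="\<lambda>i. real_of_int (N i)"] by simp
      also have "\<dots> = ?M n" using assms(2) by simp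
      finally show ?thesis using \<open>i = n\<close> by simp
    qed
  qed
  have C': "\<forall>i\<le>n. (\<Sum>j\<in>{i<..n}. Fl n \<sigma> ?M i j) - (\<Sum>k<i. Fl n \<sigma> ?M k i) = ?M i"
    using C unfolding nf_def .
  show ?thesis unfolding flow_polytope_def mem_Collect_eq using A B C' by (intro conjI)
qed

lemma unique_on_support:
  assumes "f \<in> flow_polytope n N" "\<sigma> \<in> Sset n"
    and supp: "\<forall>k l. f k l \<noteq> 0 \<longrightarrow> k < n \<and> l = \<sigma> k"
  shows "f = Fl n \<sigma> (\<lambda>i. real_of_int (N i))"
proof -
  let ?M = "\<lambda>i. real_of_int (N i)"
  have g: "good n \<sigma>" using assms(2) by (rule Sset_good)
  have "\<forall>l. f k l = Fl n \<sigma> ?M k l" for k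
  proof (induction k rule: less_induct)
    case (less k)
    show ?case
    proof (cases "k < n")
      case False then show ?thesis using supp unfolding Fl_def by auto
    next
      case True
      have s1: "(\<Sum>l\<in>{k<..n}. f k l) = f k (\<sigma> k)"
      proof -
        have "(\<Sum>l\<in>{k<..n}. f k l) = (\<Sum>l\<in>{k<..n}. if l = \<sigma> k then f k (\<sigma> k) else 0)"
          using supp by (intro sum.cong) auto
        also have "\<dots> = f k (\<sigma> k)" using g True unfolding good_def by (simp add: sum.delta')
        finally show ?thesis .
      qed
      have s2: "(\<Sum>l\<in>{k<..n}. Fl n \<sigma> ?M k l) = Fl n \<sigma> ?M k (\<sigma> k)"
        using g True unfolding good_def Fl_def by (simp add: sum.delta')
      have s3: "(\<Sum>m<k. f m k) = (\<Sum>m<k. Fl n \<sigma> ?M m k)"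
        using less by (intro sum.cong) auto
      have "nf n f k = ?M k" using nf_P[OF assms(1)] True by simp
      moreover have "nf n (Fl n \<sigma> ?M) k = ?M k" using nf_lt[OF g True] .
      ultimately have "f k (\<sigma> k) = Fl n \<sigma> ?M k (\<sigma> k)"
        unfolding nf_def s1 s2 s3 by simp
      then show ?thesis using supp unfolding Fl_def by auto
    qed
  qed
  then show ?thesis by auto
qed

lemma Fl_vertex:
  assumes "\<forall>i<n. N i > 0" "N n = - (\<Sum>i<n. N i)" "\<sigma> \<in> Sset n"
  shows "Fl n \<sigma> (\<lambda>i. real_of_int (N i)) \<in> vertices (flow_polytope n N)"
proof -
  let ?M = "\<lambda>i. real_of_int (N i)"
  let ?F = "Fl n \<sigma> ?M"
  let ?P = "flow_polytope n N"
  have inP: "?F \<in> ?P" using Fl_in_P[OF assms] .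
  have "\<not> (\<exists>g\<in>?P. \<exists>h\<in>?P. g \<noteq> h \<and>
       (\<exists>t::real. 0 < t \<and> t < 1 \<and> ?F = (\<lambda>i j. t * g i j + (1 - t) * h i j)))"
  proof
    assume "\<exists>g\<in>?P. \<exists>h\<in>?P. g \<noteq> h \<and>
       (\<exists>t::real. 0 < t \<and> t < 1 \<and> ?F = (\<lambda>i j. t * g i j + (1 - t) * h i j))"
    then obtain g h t where gP: "g \<in> ?P" and hP: "h \<in> ?P" and ne: "g \<noteq> h" and t: "0 < t" "t < 1"
      and eq: "?F = (\<lambda>i j. t * g i j + (1 - t) * h i j)" by blast
    have z: "g k l = 0 \<and> h k l = 0" if F0: "?F k l = 0" for k l
    proof (cases "k < l \<and> l \<le> n")
      case False then show ?thesis using gP hP unfolding flow_polytope_def by auto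
    next
      case edge: True
      have e: "t * g k l + (1 - t) * h k l = 0" using fun_cong[OF fun_cong[OF eq, of k], of l] F0 by simp
      have "g k l \<ge> 0" "h k l \<ge> 0" using gP hP edge unfolding flow_polytope_def by auto
      then have "t * g k l \<ge> 0" "(1-t) * h k l \<ge> 0" using t by auto
      then have "t * g k l = 0" "(1-t) * h k l = 0" using e by linarith+
      then show ?thesis using t by simp
    qed
    have sg: "\<forall>k l. g k l \<noteq> 0 \<longrightarrow> k < n \<and> l = \<sigma> k"
      using z unfolding Fl_def by (metis (no_types, lifting))
    have sh: "\<forall>k l. h k l \<noteq> 0 \<longrightarrow> k < n \<and> l = \<sigma> k"
      using z unfolding Fl_def by (metis (no_types, lifting))
    have "g = ?F" using unique_on_support[OF gP assms(3) sg] .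
    moreover have "h = ?F" using unique_on_support[OF hP assms(3) sh] .
    ultimately show False using ne by simp
  qed
  then show ?thesis using inP unfolding vertices_def by blast
qed

lemma nf_add: "nf n (\<lambda>k l. a k l + b k l) m = nf n a m + nf n b m"
  unfolding nf_def by (simp add: sum.distrib)

lemma nf_diff: "nf n (\<lambda>k l. a k l - b k l) m = nf n a m - nf n b m"
  unfolding nf_def by (simp add: sum_subtractf)

lemma nf_scale: "nf n (\<lambda>k l. c * a k l) m = c * nf n a m"
  unfolding nf_def by (simp add: sum_distrib_left right_diff_distrib)

lemma nf_ind:
  assumes "i < j" "j \<le> n"
  shows "nf n (\<lambda>k l. if k = i \<and> l = j then 1 else 0) m = (if m = i then 1 else 0) - (if m = j then 1 else 0)"
proof -
  have 1: "(\<Sum>l\<in>{m<..n}. if m = i \<and> l = j then 1 else (0::real)) = (if m = i then 1 else 0)"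
  proof (cases "m = i")
    case True then show ?thesis using assms by (simp add: sum.delta')
  qed simp
  have 2: "(\<Sum>k<m. if k = i \<and> m = j then 1 else (0::real)) = (if m = j then 1 else 0)"
  proof (cases "m = j")
    case True then show ?thesis using assms by (simp add: sum.delta')
  qed simp
  show ?thesis unfolding nf_def 1 2 ..
qed

lemma eps_exists:
  fixes d p :: "'a \<Rightarrow> real"
  assumes "finite A" "\<forall>x\<in>A. d x \<noteq> 0 \<longrightarrow> p x > 0" "\<forall>x\<in>A. p x \<ge> 0"
  shows "\<exists>e>0. \<forall>x\<in>A. e * \<bar>d x\<bar> \<le> p x"
  using assms
proof (induction A rule: finite_induct)
  case empty
  then show ?case by (intro exI[of _ 1]) simp
next
  case (insert y A)
  then obtain e where e: "e > 0" "\<forall>x\<in>A. e * \<bar>d x\<bar> \<le> p x" by auto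
  show ?case
  proof (cases "d y = 0")
    case True then show ?thesis using e insert.prems by (intro exI[of _ e]) auto
  next
    case False
    then have py: "p y > 0" using insert.prems by auto
    define e' where "e' = min e (p y / \<bar>d y\<bar>)"
    have "e' > 0" using e py False unfolding e'_def by auto
    moreover have "\<forall>x\<in>insert y A. e' * \<bar>d x\<bar> \<le> p x"
    proof
      fix x assume x: "x \<in> insert y A"
      show "e' * \<bar>d x\<bar> \<le> p x"
      proof (cases "x = y")
        case True
        have "e' * \<bar>d y\<bar> \<le> (p y / \<bar>d y\<bar>) * \<bar>d y\<bar>" unfolding e'_def
          by (intro mult_right_mono) auto
        also have "\<dots> = p y" using False by simp
        finally show ?thesis using True by simp
      next
        case False
        then have "x \<in> A" using x by simp
        have "e' * \<bar>d x\<bar> \<le> e * \<bar>d x\<bar>" unfolding e'_def by (intro mult_right_mono) auto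
        also have "\<dots> \<le> p x" using e \<open>x \<in> A\<close> by auto
        finally show ?thesis .
      qed
    qed
    ultimately show ?thesis by blast
  qed
qed

lemma out_exists:
  assumes "\<forall>i<n. N i > 0" "f \<in> flow_polytope n N" "k < n"
  shows "\<exists>l. k < l \<and> l \<le> n \<and> f k l > 0"
proof (rule ccontr)
  assume neg: "\<not> ?thesis"
  have "(\<Sum>l\<in>{k<..n}. f k l) \<le> 0"
    using neg by (intro sum_nonpos) (auto simp: not_less)
  moreover have "(\<Sum>m<k. f m k) \<ge> 0"
    using assms(2,3) unfolding flow_polytope_def by (intro sum_nonneg) auto
  moreover have "(\<Sum>l\<in>{k<..n}. f k l) - (\<Sum>m<k. f m k) = real_of_int (N k)"
    using assms(2,3) unfolding flow_polytope_def by auto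
  moreover have "real_of_int (N k) > 0" using assms(1,3) by auto
  ultimately show False by linarith
qed

lemma out_unique:
  assumes Npos: "\<forall>i<n. N i > 0" and fV: "f \<in> vertices (flow_polytope n N)"
    and i: "i < n" and p1: "f i j1 > 0" and p2: "f i j2 > 0"
  shows "j1 = j2"
proof (rule ccontr)
  assume ne: "j1 \<noteq> j2"
  let ?P = "flow_polytope n N"
  have fP: "f \<in> ?P" using fV unfolding vertices_def by auto
  have e1: "i < j1 \<and> j1 \<le> n"
  proof (rule ccontr)
    assume "\<not> (i < j1 \<and> j1 \<le> n)"
    then have "f i j1 = 0" using fP unfolding flow_polytope_def by blast
    then show False using p1 by simp
  qed
  have e2: "i < j2 \<and> j2 \<le> n"
  proof (rule ccontr)
    assume "\<not> (i < j2 \<and> j2 \<le> n)"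
    then have "f i j2 = 0" using fP unfolding flow_polytope_def by blast
    then show False using p2 by simp
  qed
  have fnn: "\<And>k l. f k l \<ge> 0"
  proof -
    fix k l show "f k l \<ge> 0"
      using fP unfolding flow_polytope_def by (cases "k < l \<and> l \<le> n") auto
  qed
  define \<tau> where "\<tau> = (\<lambda>k. SOME l. k < l \<and> l \<le> n \<and> f k l > 0)"
  have \<tau>: "k < \<tau> k \<and> \<tau> k \<le> n \<and> f k (\<tau> k) > 0" if "k < n" for k
    unfolding \<tau>_def using someI_ex[OF out_exists[OF Npos fP that]] .
  have g\<tau>: "good n \<tau>" unfolding good_def using \<tau> by auto
  define M :: "nat \<Rightarrow> real" where "M = (\<lambda>k. (if k = j1 then 1 else 0) - (if k = j2 then 1 else 0))"
  define E1 :: "nat \<Rightarrow> nat \<Rightarrow> real" where "E1 = (\<lambda>k l. if k = i \<and> l = j1 then 1 else 0)"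
  define E2 :: "nat \<Rightarrow> nat \<Rightarrow> real" where "E2 = (\<lambda>k l. if k = i \<and> l = j2 then 1 else 0)"
  define D where "D = (\<lambda>k l. Fl n \<tau> M k l + E1 k l - E2 k l)"
  have Dsupp: "f k l > 0" if "D k l \<noteq> 0" for k l
  proof -
    have "Fl n \<tau> M k l \<noteq> 0 \<or> E1 k l \<noteq> 0 \<or> E2 k l \<noteq> 0" using that unfolding D_def by auto
    then show ?thesis
    proof (elim disjE)
      assume "Fl n \<tau> M k l \<noteq> 0"
      then have "k < n" "l = \<tau> k" unfolding Fl_def by (auto split: if_splits)
      then show ?thesis using \<tau> by auto
    next
      assume "E1 k l \<noteq> 0" then show ?thesis using p1 unfolding E1_def by (auto split: if_splits)
    next
      assume "E2 k l \<noteq> 0" then show ?thesis using p2 unfolding E2_def by (auto split: if_splits)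
    qed
  qed
  have Dnf: "nf n D m = 0" if "m \<le> n" for m
  proof -
    have "nf n D m = nf n (Fl n \<tau> M) m + nf n E1 m - nf n E2 m"
      unfolding D_def nf_diff nf_add ..
    also have "nf n E1 m = (if m = i then 1 else 0) - (if m = j1 then 1 else 0)"
      unfolding E1_def by (rule nf_ind) (use e1 in auto)
    also have "nf n E2 m = (if m = i then 1 else 0) - (if m = j2 then 1 else 0)"
      unfolding E2_def by (rule nf_ind) (use e2 in auto)
    finally have eq: "nf n D m = nf n (Fl n \<tau> M) m - (if m = j1 then 1 else 0) + (if m = j2 then 1 else 0)"
      by simp
    show ?thesis
    proof (cases "m < n")
      case True
      then show ?thesis unfolding eq nf_lt[OF g\<tau> True] M_def by simp
    next
      case False
      then have mn: "m = n" using that by simp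
      have "(\<Sum>k<n. M k) = (if j1 < n then 1 else 0) - (if j2 < n then 1 else 0)"
        unfolding M_def by (simp add: sum_subtractf sum.delta')
      moreover have "nf n (Fl n \<tau> M) m = - (\<Sum>k<n. M k)" unfolding mn by (rule nf_n[OF g\<tau>])
      ultimately show ?thesis unfolding eq using e1 e2 ne mn by auto
    qed
  qed
  have Dij1: "D i j1 = 1"
  proof -
    have "flowF \<tau> M i = 0" using e1 e2 unfolding M_def by (intro flowF_zero) auto
    then show ?thesis unfolding D_def Fl_def E1_def E2_def using ne by auto
  qed
  define Ed where "Ed = {(k, l). k < l \<and> l \<le> n}"
  have finEd: "finite Ed"
    by (rule finite_subset[of _ "{..n} \<times> {..n}"]) (auto simp: Ed_def)
  obtain e where e: "e > 0" "\<forall>x\<in>Ed. e * \<bar>(case_prod D) x\<bar> \<le> (case_prod f) x"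
  proof -
    have "\<forall>x\<in>Ed. (case_prod D) x \<noteq> 0 \<longrightarrow> (case_prod f) x > 0" using Dsupp by auto
    moreover have "\<forall>x\<in>Ed. (case_prod f) x \<ge> 0" using fnn by auto
    ultimately show ?thesis using eps_exists[OF finEd, of "case_prod D" "case_prod f"] that by blast
  qed
  have eb: "e * \<bar>D k l\<bar> \<le> f k l" for k l
  proof (cases "k < l \<and> l \<le> n")
    case True then show ?thesis using e(2) unfolding Ed_def by auto
  next
    case False
    then have "f k l = 0" using fP unfolding flow_polytope_def by auto
    then have "D k l = 0" using Dsupp by fastforce
    then show ?thesis using fnn by simp
  qed
  define g where "g = (\<lambda>k l. f k l + e * D k l)"
  define h where "h = (\<lambda>k l. f k l - e * D k l)"
  have Dzero: "D k l = 0" if "\<not> (k < l \<and> l \<le> n)" for k l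
  proof -
    have "f k l = 0" using fP that unfolding flow_polytope_def by auto
    then show ?thesis using Dsupp by fastforce
  qed
  have gP: "g \<in> ?P"
  proof -
    have A: "\<forall>k l. \<not> (k < l \<and> l \<le> n) \<longrightarrow> g k l = 0"
      using fP Dzero unfolding g_def flow_polytope_def by auto
    have B: "\<forall>k l. k < l \<and> l \<le> n \<longrightarrow> g k l \<ge> 0"
    proof (intro allI impI)
      fix k l
      have "- (e * D k l) \<le> e * \<bar>D k l\<bar>" using e(1) by (simp add: abs_if)
      then show "g k l \<ge> 0" using eb[of k l] unfolding g_def by linarith
    qed
    have C: "\<forall>m\<le>n. nf n g m = real_of_int (N m)"
      unfolding g_def nf_add nf_scale using nf_P[OF fP] Dnf by simp
    show ?thesis using A B C unfolding flow_polytope_def nf_def mem_Collect_eq by (intro conjI)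
  qed
  have hP: "h \<in> ?P"
  proof -
    have A: "\<forall>k l. \<not> (k < l \<and> l \<le> n) \<longrightarrow> h k l = 0"
      using fP Dzero unfolding h_def flow_polytope_def by auto
    have B: "\<forall>k l. k < l \<and> l \<le> n \<longrightarrow> h k l \<ge> 0"
    proof (intro allI impI)
      fix k l
      have "e * D k l \<le> e * \<bar>D k l\<bar>" using e(1) by (simp add: abs_if)
      then show "h k l \<ge> 0" using eb[of k l] unfolding h_def by linarith
    qed
    have C: "\<forall>m\<le>n. nf n h m = real_of_int (N m)"
      unfolding h_def nf_diff nf_scale using nf_P[OF fP] Dnf by simp
    show ?thesis using A B C unfolding flow_polytope_def nf_def mem_Collect_eq by (intro conjI)
  qed
  have gh: "g \<noteq> h"
  proof
    assume "g = h"
    then have "g i j1 = h i j1" by simp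
    then show False using Dij1 e(1) unfolding g_def h_def by simp
  qed
  have comb: "f = (\<lambda>k l. (1/2) * g k l + (1 - 1/2) * h k l)"
    unfolding g_def h_def by (auto simp: algebra_simps)
  have "\<exists>g\<in>?P. \<exists>h\<in>?P. g \<noteq> h \<and>
       (\<exists>t::real. 0 < t \<and> t < 1 \<and> f = (\<lambda>i j. t * g i j + (1 - t) * h i j))"
    using gP hP gh comb by (intro bexI[of _ g] bexI[of _ h] conjI exI[of _ "1/2"]) auto
  then show False using fV unfolding vertices_def by blast
qed

lemma vertices_eq:
  assumes Npos: "\<forall>i<n. N i > 0" and Nn: "N n = - (\<Sum>i<n. N i)"
  shows "vertices (flow_polytope n N) = (\<lambda>\<sigma>. Fl n \<sigma> (\<lambda>i. real_of_int (N i))) ` Sset n"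
proof
  show "(\<lambda>\<sigma>. Fl n \<sigma> (\<lambda>i. real_of_int (N i))) ` Sset n \<subseteq> vertices (flow_polytope n N)"
    using Fl_vertex[OF Npos Nn] by blast
next
  show "vertices (flow_polytope n N) \<subseteq> (\<lambda>\<sigma>. Fl n \<sigma> (\<lambda>i. real_of_int (N i))) ` Sset n"
  proof
    fix f assume fV: "f \<in> vertices (flow_polytope n N)"
    then have fP: "f \<in> flow_polytope n N" unfolding vertices_def by auto
    define \<sigma> where "\<sigma> = restrict (\<lambda>k. SOME l. k < l \<and> l \<le> n \<and> f k l > 0) {..<n}"
    have s: "\<sigma> k < n + 1 \<and> k < \<sigma> k \<and> \<sigma> k \<le> n \<and> f k (\<sigma> k) > 0" if "k < n" for k
      unfolding \<sigma>_def using someI_ex[OF out_exists[OF Npos fP that]] that by auto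
    have sS: "\<sigma> \<in> Sset n" unfolding Sset_def \<sigma>_def
      by (rule restrict_PiE_iff[THEN iffD2]) (use s[unfolded \<sigma>_def] in auto)
    have supp: "\<forall>k l. f k l \<noteq> 0 \<longrightarrow> k < n \<and> l = \<sigma> k"
    proof (intro allI impI)
      fix k l assume nz: "f k l \<noteq> 0"
      have edge: "k < l \<and> l \<le> n"
      proof (rule ccontr)
        assume "\<not> (k < l \<and> l \<le> n)"
        then have "f k l = 0" using fP unfolding flow_polytope_def by blast
        then show False using nz by simp
      qed
      then have kn: "k < n" by simp
      have "f k l \<ge> 0" using fP edge unfolding flow_polytope_def by blast
      then have "f k l > 0" using nz by simp
      then have "l = \<sigma> k" using out_unique[OF Npos fV kn] s[OF kn] by blast
      then show "k < n \<and> l = \<sigma> k" using kn by simp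
    qed
    have "f = Fl n \<sigma> (\<lambda>i. real_of_int (N i))" by (rule unique_on_support[OF fP sS supp])
    then show "f \<in> (\<lambda>\<sigma>. Fl n \<sigma> (\<lambda>i. real_of_int (N i))) ` Sset n" using sS by blast
  qed
qed

lemma Fl_inj:
  assumes Npos: "\<forall>i<n. N i > 0"
  shows "inj_on (\<lambda>\<sigma>. Fl n \<sigma> (\<lambda>i. real_of_int (N i))) (Sset n)"
proof (rule inj_onI)
  fix \<sigma> \<tau> assume sS: "\<sigma> \<in> Sset n" and tS: "\<tau> \<in> Sset n"
    and eq: "Fl n \<sigma> (\<lambda>i. real_of_int (N i)) = Fl n \<tau> (\<lambda>i. real_of_int (N i))"
  have pos: "\<forall>k<n. real_of_int (N k) > 0" using Npos by auto
  show "\<sigma> = \<tau>"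
  proof (rule PiE_ext[OF sS[unfolded Sset_def] tS[unfolded Sset_def]])
    fix k assume "k \<in> {..<n}"
    then have kn: "k < n" by simp
    have "flowF \<sigma> (\<lambda>i. real_of_int (N i)) k \<ge> real_of_int (N k)" by (rule flowF_ge[OF pos kn])
    then have "Fl n \<sigma> (\<lambda>i. real_of_int (N i)) k (\<sigma> k) \<noteq> 0" unfolding Fl_def using kn pos by auto
    then have "Fl n \<tau> (\<lambda>i. real_of_int (N i)) k (\<sigma> k) \<noteq> 0" using eq by simp
    then show "\<sigma> k = \<tau> k" unfolding Fl_def by (auto split: if_splits)
  qed
qed

lemma upd_in_Sset:
  assumes "\<sigma> \<in> Sset n" "k < n" "x \<in> {k<..n}"
  shows "\<sigma>(k := x) \<in> Sset n"
proof -
  have "\<sigma>(k := x) \<in> PiE (insert k {..<n}) (\<lambda>i. {i<..n})"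
    by (rule PiE_fun_upd) (use assms in \<open>auto simp: Sset_def\<close>)
  moreover have "insert k {..<n} = {..<n}" using assms(2) by auto
  ultimately show ?thesis unfolding Sset_def by simp
qed

lemma finite_Sset: "finite (Sset n)"
  unfolding Sset_def by (rule finite_PiE) auto

lemma card_Sset: "card (Sset n) > 0"
  unfolding Sset_def by (subst card_PiE) (auto intro: prod_pos)

lemma swap_sum:
  fixes G :: "(nat \<Rightarrow> nat) \<Rightarrow> real"
  assumes k: "k < n" and j: "j \<in> {k<..n}"
    and inv: "\<forall>\<sigma>\<in>Sset n. \<forall>x\<in>{k<..n}. G (\<sigma>(k := x)) = G \<sigma>"
  shows "(\<Sum>\<sigma>\<in>Sset n. if \<sigma> k = j then G \<sigma> else 0) * real (n - k) = (\<Sum>\<sigma>\<in>Sset n. G \<sigma>)"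
proof -
  let ?S = "Sset n"
  define X where "X x = (\<Sum>\<sigma>\<in>?S. if \<sigma> k = x then G \<sigma> else 0)" for x
  have Xc: "X x = X j" if x: "x \<in> {k<..n}" for x
  proof -
    have "X x = (\<Sum>\<sigma>\<in>{\<sigma>\<in>?S. \<sigma> k = x}. G \<sigma>)"
      unfolding X_def by (simp add: sum.inter_filter finite_Sset)
    also have "\<dots> = (\<Sum>\<sigma>\<in>{\<sigma>\<in>?S. \<sigma> k = j}. G \<sigma>)"
    proof (rule sum.reindex_bij_witness[of _ "\<lambda>\<sigma>. \<sigma>(k := x)" "\<lambda>\<sigma>. \<sigma>(k := j)"])
      fix \<sigma> assume "\<sigma> \<in> {\<sigma>\<in>?S. \<sigma> k = x}"
      then show "\<sigma>(k := j, k := x) = \<sigma>" by auto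
    next
      fix \<sigma> assume "\<sigma> \<in> {\<sigma>\<in>?S. \<sigma> k = x}"
      then show "\<sigma>(k := j) \<in> {\<sigma>\<in>?S. \<sigma> k = j}" using upd_in_Sset[OF _ k j] by auto
    next
      fix \<sigma> assume "\<sigma> \<in> {\<sigma>\<in>?S. \<sigma> k = j}"
      then show "\<sigma>(k := x, k := j) = \<sigma>" by auto
    next
      fix \<sigma> assume "\<sigma> \<in> {\<sigma>\<in>?S. \<sigma> k = j}"
      then show "\<sigma>(k := x) \<in> {\<sigma>\<in>?S. \<sigma> k = x}" using upd_in_Sset[OF _ k x] by auto
    next
      fix \<sigma> assume "\<sigma> \<in> {\<sigma>\<in>?S. \<sigma> k = x}"
      then show "G (\<sigma>(k := j)) = G \<sigma>" using inv j by auto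
    qed
    also have "\<dots> = X j"
      unfolding X_def by (simp add: sum.inter_filter finite_Sset)
    finally show ?thesis .
  qed
  have "(\<Sum>\<sigma>\<in>?S. G \<sigma>) = (\<Sum>\<sigma>\<in>?S. \<Sum>x\<in>{k<..n}. if \<sigma> k = x then G \<sigma> else 0)"
  proof (rule sum.cong[OF refl])
    fix \<sigma> assume "\<sigma> \<in> ?S"
    then have "\<sigma> k \<in> {k<..n}" using Sset_good[of \<sigma> n] k unfolding good_def by auto
    then show "G \<sigma> = (\<Sum>x\<in>{k<..n}. if \<sigma> k = x then G \<sigma> else 0)" by (simp add: sum.delta)
  qed
  also have "\<dots> = (\<Sum>x\<in>{k<..n}. X x)" unfolding X_def by (rule sum.swap)
  also have "\<dots> = (\<Sum>x\<in>{k<..n}. X j)" using Xc by (rule sum.cong[OF refl])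
  also have "\<dots> = X j * real (n - k)" by simp
  finally show ?thesis unfolding X_def by simp
qed

lemma sum_V_rec:
  fixes M :: "nat \<Rightarrow> real"
  assumes i: "i < n"
  shows "(\<Sum>\<sigma>\<in>Sset n. flowF \<sigma> M i) =
    real (card (Sset n)) * M i + (\<Sum>k<i. (\<Sum>\<sigma>\<in>Sset n. flowF \<sigma> M k) / real (n - k))"
proof -
  let ?S = "Sset n"
  have "(\<Sum>\<sigma>\<in>?S. flowF \<sigma> M i) = (\<Sum>\<sigma>\<in>?S. M i + (\<Sum>k<i. if \<sigma> k = i then flowF \<sigma> M k else 0))"
    by (intro sum.cong refl) (subst flowF.simps, simp)
  also have "\<dots> = real (card ?S) * M i + (\<Sum>k<i. \<Sum>\<sigma>\<in>?S. if \<sigma> k = i then flowF \<sigma> M k else 0)"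
    by (simp add: sum.distrib sum.swap[of _ ?S])
  also have "(\<Sum>k<i. \<Sum>\<sigma>\<in>?S. if \<sigma> k = i then flowF \<sigma> M k else 0) =
      (\<Sum>k<i. (\<Sum>\<sigma>\<in>?S. flowF \<sigma> M k) / real (n - k))"
  proof (rule sum.cong[OF refl])
    fix k assume "k \<in> {..<i}"
    then have k: "k < n" and ki: "i \<in> {k<..n}" using i by auto
    have "(\<Sum>\<sigma>\<in>?S. if \<sigma> k = i then flowF \<sigma> M k else 0) * real (n - k) = (\<Sum>\<sigma>\<in>?S. flowF \<sigma> M k)"
      by (rule swap_sum[OF k ki]) (auto intro: flowF_local)
    moreover have "real (n - k) > 0" using k by simp
    ultimately show "(\<Sum>\<sigma>\<in>?S. if \<sigma> k = i then flowF \<sigma> M k else 0) = (\<Sum>\<sigma>\<in>?S. flowF \<sigma> M k) / real (n - k)"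
      by (simp add: field_simps)
  qed
  finally show ?thesis .
qed

lemma sum_Fl:
  fixes M :: "nat \<Rightarrow> real"
  assumes i: "i < n" and j: "i < j" "j \<le> n"
  shows "(\<Sum>\<sigma>\<in>Sset n. Fl n \<sigma> M i j) = (\<Sum>\<sigma>\<in>Sset n. flowF \<sigma> M i) / real (n - i)"
proof -
  have "(\<Sum>\<sigma>\<in>Sset n. Fl n \<sigma> M i j) * real (n - i) = (\<Sum>\<sigma>\<in>Sset n. flowF \<sigma> M i)"
  proof -
    have "(\<Sum>\<sigma>\<in>Sset n. Fl n \<sigma> M i j) = (\<Sum>\<sigma>\<in>Sset n. if \<sigma> i = j then flowF \<sigma> M i else 0)"
      unfolding Fl_def using i by (intro sum.cong) auto
    also have "\<dots> * real (n - i) = (\<Sum>\<sigma>\<in>Sset n. flowF \<sigma> M i)"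
      by (rule swap_sum[OF i]) (use j in \<open>auto intro: flowF_local\<close>)
    finally show ?thesis .
  qed
  moreover have "real (n - i) > 0" using i by simp
  ultimately show ?thesis by (simp add: field_simps)
qed

lemma alg_step:
  fixes d p x :: real
  assumes "d > 0"
  shows "p / (d + 1) + (x + p / (d + 1)) / d = (p + x) / d"
proof -
  have a: "d + 1 > 0" "d > 0" using assms by auto
  define e where "e = d + 1"
  have e: "e \<noteq> 0" "d \<noteq> 0" "e = d + 1" using a e_def by auto
  have "p / e + (x + p / e) / d = (p * d + x * e + p) / (d * e)"
    using e(1,2) by (simp add: field_simps)
  also have "p * d + x * e + p = (p + x) * e" unfolding e(3) by (simp add: algebra_simps)
  also have "(p + x) * e / (d * e) = (p + x) / d" using e by simp
  finally show ?thesis unfolding e_def .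
qed

lemma closed_form:
  fixes a :: "nat \<Rightarrow> real"
  assumes rec: "\<And>i. i < n \<Longrightarrow> a i = real_of_int (N i) + (\<Sum>k<i. a k / real (n - k))"
  shows "i \<le> n \<Longrightarrow> (\<Sum>k<i. a k / real (n - k)) = psum N i / real (n - i + 1)"
proof (induction i)
  case 0 then show ?case by (simp add: psum_def)
next
  case (Suc i)
  then have i: "i < n" by simp
  have IH: "(\<Sum>k<i. a k / real (n - k)) = psum N i / real (n - i + 1)" using Suc by simp
  have ps: "psum N (Suc i) = psum N i + real_of_int (N i)" unfolding psum_def by simp
  have d1: "real (n - i) = real n - real i" "real (n - Suc i + 1) = real n - real i"
    "real (n - i + 1) = real n - real i + 1" using i by auto
  have pos: "real n - real i > 0" using i by simp
  have "(\<Sum>k<Suc i. a k / real (n - k)) = psum N i / real (n - i + 1) + (real_of_int (N i) + psum N i / real (n - i + 1)) / real (n - i)"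
    using IH rec[OF i] by simp
  also have "\<dots> = psum N (Suc i) / real (n - Suc i + 1)"
    unfolding ps d1 using alg_step[OF pos] by simp
  finally show ?case .
qed

lemma alg2:
  fixes d p x :: real
  assumes "d > 0"
  shows "(x + p / (d + 1)) / d = (p + x) / d - p / (d + 1)"
proof -
  define e where "e = d + 1"
  have e: "e \<noteq> 0" "d \<noteq> 0" "e = d + 1" using assms e_def by auto
  have "(x + p / e) / d = (x * e + p) / (d * e)" using e(1,2) by (simp add: field_simps)
  moreover have "(p + x) / d - p / e = ((p + x) * e - p * d) / (d * e)" using e(1,2) by (simp add: field_simps)
  moreover have "(p + x) * e - p * d = x * e + p" unfolding e(3) by (simp add: algebra_simps)
  ultimately show ?thesis unfolding e_def by simp
qed

theorem proposition4p1:
  fixes n :: nat and N :: "nat \<Rightarrow> int"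
  assumes "n \<ge> 1"
    and "\<forall>i<n. N i > 0"
    and "N n = - (\<Sum>i<n. N i)"
  shows "finite (vertices (flow_polytope n N)) \<and>
         vertex_average (flow_polytope n N) =
           (\<lambda>i j. if i < j \<and> j \<le> n then cval n N (n - i) else 0)"
proof -
  let ?M = "\<lambda>i. real_of_int (N i)"
  let ?S = "Sset n"
  let ?F = "\<lambda>\<sigma>. Fl n \<sigma> ?M"
  have Veq: "vertices (flow_polytope n N) = ?F ` ?S" by (rule vertices_eq[OF assms(2,3)])
  have inj: "inj_on ?F ?S" by (rule Fl_inj[OF assms(2)])
  have fin: "finite (vertices (flow_polytope n N))" unfolding Veq using finite_Sset by simp
  have cardV: "card (vertices (flow_polytope n N)) = card ?S" unfolding Veq using inj by (simp add: card_image)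
  define c where "c = real (card ?S)"
  have c: "c > 0" unfolding c_def using card_Sset by simp
  define A where "A k = (\<Sum>\<sigma>\<in>?S. flowF \<sigma> ?M k)" for k
  define a where "a k = A k / c" for k
  have rec: "a i = ?M i + (\<Sum>k<i. a k / real (n - k))" if "i < n" for i
  proof -
    have "A i = c * ?M i + (\<Sum>k<i. A k / real (n - k))"
      unfolding A_def c_def by (rule sum_V_rec[OF that])
    then have "A i / c = ?M i + (\<Sum>k<i. A k / real (n - k)) / c" using c by (simp add: field_simps)
    also have "(\<Sum>k<i. A k / real (n - k)) / c = (\<Sum>k<i. a k / real (n - k))"
      unfolding a_def sum_divide_distrib by (simp add: field_simps)
    finally show ?thesis unfolding a_def .
  qed
  have avg: "vertex_average (flow_polytope n N) i j = (if i < j \<and> j \<le> n then cval n N (n - i) else 0)" for i j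
  proof (cases "i < j \<and> j \<le> n")
    case False
    have "(\<Sum>v\<in>vertices (flow_polytope n N). v i j) = 0"
      using False by (intro sum.neutral) (auto simp: vertices_def flow_polytope_def)
    then show ?thesis using False unfolding vertex_average_def by auto
  next
    case True
    then have i: "i < n" and ij: "i < j" "j \<le> n" by auto
    have "(\<Sum>v\<in>vertices (flow_polytope n N). v i j) = (\<Sum>\<sigma>\<in>?S. ?F \<sigma> i j)"
      unfolding Veq by (simp add: sum.reindex[OF inj])
    also have "\<dots> = A i / real (n - i)" unfolding A_def by (rule sum_Fl[OF i ij])
    finally have s: "vertex_average (flow_polytope n N) i j = a i / real (n - i)"
      unfolding vertex_average_def cardV a_def c_def[symmetric] by simp
    have cf: "(\<Sum>k<i. a k / real (n - k)) = psum N i / real (n - i + 1)"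
      by (rule closed_form[OF rec]) (use i in auto)
    have d: "real (n - i) > 0" "real (n - i + 1) = real (n - i) + 1" using i by auto
    have nn: "n - (n - i) = i" "n - (n - i) + 1 = Suc i" using i by auto
    have ps: "psum N (Suc i) = psum N i + ?M i" unfolding psum_def by simp
    have "a i / real (n - i) = (?M i + psum N i / (real (n - i) + 1)) / real (n - i)"
      using rec[OF i] cf d(2) by simp
    also have "\<dots> = (psum N i + ?M i) / real (n - i) - psum N i / (real (n - i) + 1)"
      by (rule alg2[OF d(1)])
    also have "\<dots> = cval n N (n - i)"
      unfolding cval_def nn d(2) using ps by simp
    finally show ?thesis using s True by simp
  qed
  show ?thesis using fin avg by auto
qed

end
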